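(* Let $\mathbb{F}\in\{\mathbb{R},\mathbb{C}\}$, $N\ge2$, and let $\mathcal{P}(M,N)$ be the set of Parseval frames for $\mathbb{F}^N$ with $M$ vectors. Suppose an equiangular Parseval frame exists in $\mathcal{P}(M,N)$. Then $\Phi\in\mathcal{P}(M,N)$ maximizes the $2$-nuclear energy $NE_2$ over $\mathcal{P}(M,N)$ if and only if $\Phi$ is an equiangular Parseval frame.
   Context: A Parseval frame for $\mathbb{F}^N$ is a family $\{\varphi_i\}_{i=1}^M\subseteq\mathbb{F}^N$ whose $N\times M$ matrix $\Phi$ (columns $\varphi_i$) satisfies $\Phi\Phi^*=I$; it is equiangular if all $\|\varphi_i\|$ are equal and all $|\langle\varphi_i,\varphi_j\rangle|$, $i\ne j$, are equal. For $K\subseteq[M]$, $\Phi_K$ is the submatrix of columns indexed by $K$. The nuclear norm of a matrix $F$ is $\|F\|_*=\sum_i\sigma_i(F)$, the sum of its singular values. The $k$-nuclear energy is $NE_k(\Phi)=\sum_{|K|=k}\|\Phi_K\|_*$. *)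

theory Defs
  imports "HOL-Analysis.Analysis" "Jordan_Normal_Form.Char_Poly" "Jordan_Normal_Form.DL_Submatrix"
begin

text \<open>The scalar field
  F is encoded as a subset FF of the complex numbers: FF = Reals (real case) or FF = UNIV
  (complex case); a matrix over F is a complex matrix all of whose entries lie in FF.\<close>

definition cadj :: "complex mat \<Rightarrow> complex mat" where
  "cadj F = mat (dim_col F) (dim_row F) (\<lambda>(i,j). cnj (F $$ (j,i)))"

definition parseval_frame :: "complex set \<Rightarrow> nat \<Rightarrow> nat \<Rightarrow> complex mat \<Rightarrow> bool" where
  "parseval_frame FF N M Phi \<longleftrightarrow>
     Phi \<in> carrier_mat N M \<and> (\<forall>i<N. \<forall>j<M. Phi $$ (i,j) \<in> FF) \<and> Phi * cadj Phi = 1\<^sub>m N"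

definition col_inner :: "complex mat \<Rightarrow> nat \<Rightarrow> nat \<Rightarrow> complex" where
  "col_inner Phi i j = (\<Sum>k<dim_row Phi. Phi $$ (k,i) * cnj (Phi $$ (k,j)))"

definition col_norm :: "complex mat \<Rightarrow> nat \<Rightarrow> real" where
  "col_norm Phi i = sqrt (\<Sum>k<dim_row Phi. (cmod (Phi $$ (k,i)))^2)"

definition equiangular :: "complex mat \<Rightarrow> bool" where
  "equiangular Phi \<longleftrightarrow>
     (\<forall>i<dim_col Phi. \<forall>j<dim_col Phi. col_norm Phi i = col_norm Phi j) \<and>
     (\<forall>i<dim_col Phi. \<forall>j<dim_col Phi. \<forall>k<dim_col Phi. \<forall>l<dim_col Phi.
        i \<noteq> j \<longrightarrow> k \<noteq> l \<longrightarrow> cmod (col_inner Phi i j) = cmod (col_inner Phi k l))"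

text \<open>Singular values of F are the square roots of the eigenvalues (with algebraic multiplicity)
  of F^* F; these eigenvalues are real and nonnegative. The nuclear norm is their sum.\<close>
definition nuclear_norm :: "complex mat \<Rightarrow> real" where
  "nuclear_norm F =
     (\<Sum>mu\<in>{mu. poly (char_poly (cadj F * F)) mu = 0}.
        real (order mu (char_poly (cadj F * F))) * sqrt (Re mu))"

definition cols_sub :: "complex mat \<Rightarrow> nat set \<Rightarrow> complex mat" where
  "cols_sub Phi K = submatrix Phi {..<dim_row Phi} K"

definition nuclear_energy :: "nat \<Rightarrow> complex mat \<Rightarrow> real" where
  "nuclear_energy k Phi = (\<Sum>K\<in>{K. K \<subseteq> {..<dim_col Phi} \<and> card K = k}. nuclear_norm (cols_sub Phi K))"

end

theory Submission
  imports Defs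
begin

lemma det2: assumes "(A :: 'a :: comm_ring_1 mat) \<in> carrier_mat 2 2"
  shows "det A = A $$ (0,0) * A $$ (1,1) - A $$ (0,1) * A $$ (1,0)"
proof -
  have "det A = (\<Sum>i<2. A $$ (i,0) * cofactor A i 0)" by (rule laplace_expansion_column[OF assms], simp)
  also have "\<dots> = A $$ (0,0) * cofactor A 0 0 + A $$ (1,0) * cofactor A 1 0"
    by (simp add: numeral_2_eq_2)
  also have "cofactor A 0 0 = A $$ (1,1)"
    unfolding cofactor_def using assms
    by (subst det_single, auto simp: mat_delete_def)
  also have "cofactor A 1 0 = - A $$ (0,1)"
    unfolding cofactor_def using assms
    by (subst det_single, auto simp: mat_delete_def)
  finally show ?thesis by (simp add: algebra_simps)
qed

lemma char_poly2: assumes "(A :: 'a :: comm_ring_1 mat) \<in> carrier_mat 2 2"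
  shows "char_poly A = [: A $$ (0,0) * A $$ (1,1) - A $$ (0,1) * A $$ (1,0), - (A $$ (0,0) + A $$ (1,1)), 1 :]"
  unfolding char_poly_def
  apply (subst det2)
  using assms apply (simp add: char_poly_matrix_def)
  using assms apply (simp add: char_poly_matrix_def)
  done

lemma roots2:
  fixes x y :: complex and f :: "complex \<Rightarrow> real"
  assumes p: "p = [:-x,1:]*[:-y,1:]"
  shows "(\<Sum>mu\<in>{mu. poly p mu = 0}. real (order mu p) * f mu) = f x + f y"
proof (cases "x = y")
  case True
  have pp: "p = [:-x,1:]^2" using p True by (simp add: power2_eq_square)
  have r: "{mu. poly p mu = 0} = {x}" using pp by auto
  have "order x p = 2" unfolding pp by (rule order_power_n_n)
  then show ?thesis using r True by simp
next
  case False
  have pm: "poly p mu = (mu - x)*(mu-y)" for mu by (simp add: p algebra_simps)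
  have r: "{mu. poly p mu = 0} = {x,y}" by (auto simp: pm)
  have nz: "[:-x,1:]*[:-y,1:] \<noteq> 0" by (simp add: pCons_eq_0_iff)
  have o1: "order x p = 1" unfolding p
    apply (subst order_mult[OF nz])
    using order_power_n_n[of x 1] order_0I[of "[:-y,1:]" x] False by simp
  have o2: "order y p = 1" unfolding p
    apply (subst order_mult[OF nz])
    using order_power_n_n[of y 1] order_0I[of "[:-x,1:]" y] False by simp
  show ?thesis using r o1 o2 False by simp
qed

lemma eig2:
  fixes a b t :: real
  assumes a: "a \<ge> 0" and b: "b \<ge> 0" and t: "0 \<le> t" "t \<le> a * b"
  shows "\<exists>x y. x \<ge> 0 \<and> y \<ge> 0 \<and>
     [: complex_of_real (a*b - t), - complex_of_real (a + b), 1 :] = [:- complex_of_real x,1:]*[:- complex_of_real y,1:]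
     \<and> sqrt x + sqrt y = sqrt (a + b + 2 * sqrt (a*b - t))"
proof -
  define dsc where "dsc = (a - b)^2 + 4 * t"
  have dsc0: "dsc \<ge> 0" using t unfolding dsc_def by simp
  define x where "x = (a + b + sqrt dsc) / 2"
  define y where "y = (a + b - sqrt dsc) / 2"
  have sq: "sqrt dsc ^2 = dsc" using dsc0 by simp
  have "sqrt dsc \<le> a + b"
  proof -
    have "dsc \<le> (a+b)^2" unfolding dsc_def using t by (simp add: power2_eq_square algebra_simps)
    then have "sqrt dsc \<le> sqrt ((a+b)^2)" by (rule real_sqrt_le_mono)
    then show ?thesis using a b by simp
  qed
  then have y0: "y \<ge> 0" unfolding y_def by simp
  have x0: "x \<ge> 0" unfolding x_def using a b dsc0 by simp
  have sxy: "x + y = a + b" unfolding x_def y_def by (simp add: field_simps)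
  have "x * y = ((a+b)^2 - (sqrt dsc)^2)/4" unfolding x_def y_def by (simp add: field_simps power2_eq_square)
  then have "x * y = ((a+b)^2 - dsc)/4" by (simp only: sq)
  then have pxy: "x * y = a * b - t" unfolding dsc_def by (simp add: power2_eq_square algebra_simps)
  have poly: "[: complex_of_real (a*b - t), - complex_of_real (a + b), 1 :] = [:- complex_of_real x,1:]*[:- complex_of_real y,1:]"
    proof -
    have e1: "a*b = t + x*y" using pxy by simp
    have "complex_of_real (a*b) = of_real (t + x*y)" "complex_of_real (x+y) = of_real (a+b)"
      by (simp only: e1, simp only: sxy)
    then show ?thesis by (simp add: algebra_simps)
  qed
  have "(sqrt x + sqrt y)^2 = x + y + 2 * sqrt (x*y)"
    using x0 y0 by (simp add: power2_eq_square algebra_simps real_sqrt_mult)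
  then have "sqrt (x + y + 2 * sqrt (x*y)) = sqrt x + sqrt y"
    by (intro real_sqrt_unique) (auto simp: x0 y0)
  then show ?thesis using x0 y0 poly sxy pxy by auto
qed


definition aa :: "complex mat \<Rightarrow> nat \<Rightarrow> real" where
  "aa Phi i = (\<Sum>k<dim_row Phi. (cmod (Phi $$ (k,i)))^2)"
definition tt :: "complex mat \<Rightarrow> nat \<Rightarrow> nat \<Rightarrow> real" where
  "tt Phi i j = (cmod (col_inner Phi i j))^2"

lemma aa_nonneg: "aa Phi i \<ge> 0" unfolding aa_def by (intro sum_nonneg) auto

lemma CS: "tt Phi i j \<le> aa Phi i * aa Phi j"
proof -
  have "cmod (col_inner Phi i j) \<le> (\<Sum>k<dim_row Phi. cmod (Phi $$ (k,i)) * cmod (Phi $$ (k,j)))"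
    unfolding col_inner_def by (rule order_trans[OF norm_sum]) (simp add: norm_mult)
  then have "tt Phi i j \<le> (\<Sum>k<dim_row Phi. cmod (Phi $$ (k,i)) * cmod (Phi $$ (k,j)))^2"
    unfolding tt_def by (simp add: power_mono)
  also have "\<dots> \<le> aa Phi i * aa Phi j" unfolding aa_def by (rule Cauchy_Schwarz_ineq_sum)
  finally show ?thesis .
qed

lemma cols_sub_dims:
  assumes "Phi \<in> carrier_mat N M" "i < j" "j < M"
  shows "dim_row (cols_sub Phi {i,j}) = N" "dim_col (cols_sub Phi {i,j}) = 2"
proof -
  have "{k. k < N \<and> k \<in> {..<dim_row Phi}} = {..<N}" using assms by auto
  then show "dim_row (cols_sub Phi {i,j}) = N" unfolding cols_sub_def dim_submatrix using assms by simp
  have "{k. k < dim_col Phi \<and> k \<in> {i,j}} = {i,j}" using assms by auto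
  then show "dim_col (cols_sub Phi {i,j}) = 2" unfolding cols_sub_def dim_submatrix using assms by simp
qed

lemma cols_sub_index:
  assumes "Phi \<in> carrier_mat N M" "i < j" "j < M" "k < N"
  shows "cols_sub Phi {i,j} $$ (k,0) = Phi $$ (k,i)" "cols_sub Phi {i,j} $$ (k,1) = Phi $$ (k,j)"
proof -
  have r: "{k. k < dim_row Phi \<and> k \<in> {..<dim_row Phi}} = {..<N}" using assms by auto
  have c: "{k. k < dim_col Phi \<and> k \<in> {i,j}} = {i,j}" using assms by auto
  have pk: "pick {..<N} k = k"
  proof -
    have "{a\<in>{..<N}. a < k} = {..<k}" using assms by auto
    then have "card {a\<in>{..<N}. a < k} = k" by simp
    then show ?thesis using pick_card_in_set[of k "{..<N}"] assms by simp
  qed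
  have p0: "pick {i,j} 0 = i"
  proof -
    have "{a\<in>{i,j}. a < i} = {}" using assms by auto
    then have ce: "card {a\<in>{i,j}. a < i} = 0" by (simp only: card.empty)
    have h: "pick {i,j} (card {a\<in>{i,j}. a < i}) = i" by (rule pick_card_in_set) simp
    then show ?thesis by (simp only: ce)
  qed
  have p1: "pick {i,j} 1 = j"
  proof -
    have "{a\<in>{i,j}. a < j} = {i}" using assms by auto
    then have ce: "card {a\<in>{i,j}. a < j} = 1" by simp
    have h: "pick {i,j} (card {a\<in>{i,j}. a < j}) = j" by (rule pick_card_in_set) simp
    then show ?thesis by (simp only: ce)
  qed
  show "cols_sub Phi {i,j} $$ (k,0) = Phi $$ (k,i)" unfolding cols_sub_def
    using assms r c pk p0 by (subst submatrix_index) auto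
  show "cols_sub Phi {i,j} $$ (k,1) = Phi $$ (k,j)" unfolding cols_sub_def
    using assms r c pk p1 by (subst submatrix_index) auto
qed


lemma nn_pair:
  assumes Phi: "Phi \<in> carrier_mat N M" and ij: "i < j" "j < M"
  shows "nuclear_norm (cols_sub Phi {i,j}) = sqrt (aa Phi i + aa Phi j + 2 * sqrt (aa Phi i * aa Phi j - tt Phi i j))"
proof -
  define S where "S = cols_sub Phi {i,j}"
  have dS: "dim_row S = N" "dim_col S = 2" unfolding S_def using cols_sub_dims[OF assms] by auto
  have S0: "S $$ (k,0) = Phi $$ (k,i)" and S1: "S $$ (k,1) = Phi $$ (k,j)" if "k < N" for k
    unfolding S_def using cols_sub_index[OF assms that] by auto
  have S1': "S $$ (k, Suc 0) = Phi $$ (k,j)" if "k < N" for k using S1[OF that] by simp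
  define G where "G = cadj S * S"
  have cS: "cadj S \<in> carrier_mat 2 N" unfolding cadj_def using dS by simp
  have G: "G \<in> carrier_mat 2 2" unfolding G_def using cS dS by auto
  have Gent: "G $$ (p,q) = (\<Sum>k<N. cnj (S $$ (k,p)) * S $$ (k,q))" if "p < 2" "q < 2" for p q
    unfolding G_def using that cS dS
    by (simp add: scalar_prod_def cadj_def lessThan_atLeast0 row_def col_def)
  have g00: "G $$ (0,0) = (\<Sum>k<N. cnj (S $$ (k,0)) * S $$ (k,0))" using Gent[of 0 0] by simp
  have g11: "G $$ (1,1) = (\<Sum>k<N. cnj (S $$ (k,1)) * S $$ (k,1))" using Gent[of 1 1] by simp
  have g10: "G $$ (1,0) = (\<Sum>k<N. cnj (S $$ (k,1)) * S $$ (k,0))" using Gent[of 1 0] by simp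
  have g01: "G $$ (0,1) = (\<Sum>k<N. cnj (S $$ (k,0)) * S $$ (k,1))" using Gent[of 0 1] by simp
  have dr: "dim_row Phi = N" using Phi by simp
  have G00: "G $$ (0,0) = of_real (aa Phi i)"
    unfolding g00 aa_def dr of_real_sum
    by (intro sum.cong refl) (simp only: S0 complex_norm_square lessThan_iff mult.commute)
  have G11: "G $$ (1,1) = of_real (aa Phi j)"
    unfolding g11 aa_def dr of_real_sum
    by (intro sum.cong refl) (simp only: S1 complex_norm_square lessThan_iff mult.commute)
  have G10: "G $$ (1,0) = col_inner Phi i j"
    unfolding g10 col_inner_def dr
    by (intro sum.cong refl) (simp add: S0 S1 S1' mult.commute)
  have G01: "G $$ (0,1) = cnj (col_inner Phi i j)"
    unfolding g01 col_inner_def dr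
    by (simp add: S0 S1 S1' mult.commute)
  have G0110: "G $$ (0,1) * G $$ (1,0) = of_real (tt Phi i j)"
    unfolding G01 G10 tt_def complex_norm_square by (simp add: mult.commute)
  have cp: "char_poly G = [: complex_of_real (aa Phi i * aa Phi j - tt Phi i j), - complex_of_real (aa Phi i + aa Phi j), 1 :]"
    unfolding char_poly2[OF G] G00 G11 G0110 by simp
  have t0: "0 \<le> tt Phi i j" unfolding tt_def by simp
  obtain x y where xy: "x \<ge> 0" "y \<ge> 0"
     "[: complex_of_real (aa Phi i * aa Phi j - tt Phi i j), - complex_of_real (aa Phi i + aa Phi j), 1 :] = [:- complex_of_real x,1:]*[:- complex_of_real y,1:]"
     "sqrt x + sqrt y = sqrt (aa Phi i + aa Phi j + 2 * sqrt (aa Phi i * aa Phi j - tt Phi i j))"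
    using eig2[OF aa_nonneg aa_nonneg t0 CS] by blast
  have "nuclear_norm S = sqrt (Re (complex_of_real x)) + sqrt (Re (complex_of_real y))"
    unfolding nuclear_norm_def G_def[symmetric] cp xy(3) by (rule roots2) simp
  then show ?thesis using xy(4) S_def by simp
qed


lemma sqrt_sum_le:
  fixes x :: "'a \<Rightarrow> real"
  assumes "\<And>p. p \<in> S \<Longrightarrow> x p \<ge> 0"
  shows "(\<Sum>p\<in>S. sqrt (x p)) \<le> sqrt (real (card S) * (\<Sum>p\<in>S. x p))"
proof -
  have "(\<Sum>p\<in>S. sqrt (x p) * 1)^2 \<le> (\<Sum>p\<in>S. (sqrt (x p))^2) * (\<Sum>p\<in>S. 1^2)"
    by (rule Cauchy_Schwarz_ineq_sum)
  also have "\<dots> = (\<Sum>p\<in>S. x p) * real (card S)" using assms by simp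
  finally show ?thesis by (intro real_le_rsqrt) (simp add: mult.commute)
qed

lemma sqrt_sum_eq:
  fixes x :: "'a \<Rightarrow> real"
  assumes fin: "finite S" and nn: "\<And>p. p \<in> S \<Longrightarrow> x p \<ge> 0"
    and eq: "(\<Sum>p\<in>S. sqrt (x p)) = sqrt (real (card S) * (\<Sum>p\<in>S. x p))"
  shows "\<forall>p\<in>S. \<forall>q\<in>S. x p = x q"
proof -
  define s where "s p = sqrt (x p)" for p
  have s2: "(s p)^2 = x p" if "p \<in> S" for p using nn[OF that] unfolding s_def by simp
  have "(\<Sum>p\<in>S. s p)^2 = real (card S) * (\<Sum>p\<in>S. x p)"
    unfolding s_def eq using nn by (simp add: sum_nonneg)
  also have "\<dots> = real (card S) * (\<Sum>p\<in>S. (s p)^2)" using s2 by simp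
  finally have E: "(\<Sum>p\<in>S. s p)^2 = real (card S) * (\<Sum>p\<in>S. (s p)^2)" .
  have "(\<Sum>p\<in>S. \<Sum>q\<in>S. (s p - s q)^2) = (\<Sum>p\<in>S. \<Sum>q\<in>S. (s p)^2 + (s q)^2 - 2 * s p * s q)"
    by (simp add: power2_diff algebra_simps)
  also have "\<dots> = (\<Sum>p\<in>S. real (card S) * (s p)^2 + (\<Sum>q\<in>S. (s q)^2) - 2 * s p * (\<Sum>q\<in>S. s q))"
    by (simp add: sum.distrib sum_subtractf sum_distrib_left mult.assoc)
  also have "\<dots> = (\<Sum>p\<in>S. real (card S) * (s p)^2) + (\<Sum>p\<in>S. (\<Sum>q\<in>S. (s q)^2)) - (\<Sum>p\<in>S. 2 * s p * (\<Sum>q\<in>S. s q))"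
    by (simp add: sum.distrib sum_subtractf)
  also have "\<dots> = 2 * real (card S) * (\<Sum>p\<in>S. (s p)^2) - 2 * (\<Sum>p\<in>S. s p)^2"
    by (simp add: sum_distrib_left[symmetric] sum_distrib_right[symmetric] power2_eq_square)
  also have "\<dots> = 0" using E by simp
  finally have Z: "(\<Sum>p\<in>S. \<Sum>q\<in>S. (s p - s q)^2) = 0" .
  have "\<forall>p\<in>S. (\<Sum>q\<in>S. (s p - s q)^2) = 0"
    using Z fin by (subst (asm) sum_nonneg_eq_0_iff) (auto intro: sum_nonneg)
  then have A: "\<forall>p\<in>S. \<forall>q\<in>S. (s p - s q)^2 = 0"
  proof (intro ballI)
    fix p q assume H: "\<forall>p\<in>S. (\<Sum>q\<in>S. (s p - s q)^2) = 0" and p: "p \<in> S" and q: "q \<in> S"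
    have "(\<Sum>q\<in>S. (s p - s q)^2) = 0" using H p by blast
    then show "(s p - s q)^2 = 0" using fin q by (simp add: sum_nonneg_eq_0_iff)
  qed
  show ?thesis
  proof (intro ballI)
    fix p q assume p: "p \<in> S" and q: "q \<in> S"
    have "(s p - s q)^2 = 0" using A p q by blast
    then have "s p = s q" by simp
    then have "(s p)^2 = (s q)^2" by simp
    then show "x p = x q" using s2[OF p] s2[OF q] by simp
  qed
qed

lemma sqrt_sum_const:
  fixes x :: "'a \<Rightarrow> real"
  assumes "\<And>p. p \<in> S \<Longrightarrow> x p = c" "c \<ge> 0"
  shows "(\<Sum>p\<in>S. sqrt (x p)) = sqrt (real (card S) * (\<Sum>p\<in>S. x p))"
proof -
  have "(\<Sum>p\<in>S. sqrt (x p)) = real (card S) * sqrt c" using assms by simp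
  also have "\<dots> = sqrt (real (card S) * (real (card S) * c))"
    using assms by (simp add: real_sqrt_mult)
  also have "real (card S) * c = (\<Sum>p\<in>S. x p)" using assms by simp
  finally show ?thesis .
qed

definition Sg :: "nat \<Rightarrow> (nat \<times> nat) set" where
  "Sg M = (SIGMA j:{..<M}. {..<j})"

lemma finite_Sg[simp]: "finite (Sg M)" unfolding Sg_def by auto

lemma ne2_reindex:
  "nuclear_energy 2 Phi = (\<Sum>p\<in>Sg (dim_col Phi). nuclear_norm (cols_sub Phi {snd p, fst p}))"
proof -
  let ?h = "\<lambda>p::nat\<times>nat. {snd p, fst p}"
  have "bij_betw ?h (Sg (dim_col Phi)) {K. K \<subseteq> {..<dim_col Phi} \<and> card K = 2}"
  proof (rule bij_betwI')
    fix p q assume "p \<in> Sg (dim_col Phi)" "q \<in> Sg (dim_col Phi)"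
    then show "(?h p = ?h q) = (p = q)" unfolding Sg_def
      by (cases p, cases q) (auto simp: doubleton_eq_iff)
  next
    fix p assume "p \<in> Sg (dim_col Phi)"
    then show "?h p \<in> {K. K \<subseteq> {..<dim_col Phi} \<and> card K = 2}" unfolding Sg_def by auto
  next
    fix K assume "K \<in> {K. K \<subseteq> {..<dim_col Phi} \<and> card K = 2}"
    then obtain a b where K: "K = {a,b}" "a \<noteq> b" "a < dim_col Phi" "b < dim_col Phi"
      by (auto simp: card_2_iff)
    show "\<exists>p\<in>Sg (dim_col Phi). K = ?h p"
    proof (cases "a < b")
      case True then show ?thesis using K by (intro bexI[of _ "(b,a)"]) (auto simp: Sg_def)
    next
      case False then show ?thesis using K by (intro bexI[of _ "(a,b)"]) (auto simp: Sg_def)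
    qed
  qed
  then show ?thesis unfolding nuclear_energy_def
    by (subst sum.reindex_bij_betw[symmetric]) auto
qed

lemma sym_sum:
  fixes h :: "nat \<Rightarrow> nat \<Rightarrow> real"
  assumes sym: "\<And>i j. h i j = h j i"
  shows "2 * (\<Sum>p\<in>Sg M. h (snd p) (fst p)) = (\<Sum>i<M. \<Sum>j<M. h i j) - (\<Sum>i<M. h i i)"
proof -
  have "(\<Sum>p\<in>Sg M. h (snd p) (fst p)) = (\<Sum>j<M. \<Sum>i<j. h i j)"
  proof -
    have "(\<Sum>j<M. \<Sum>i<j. h i j) = (\<Sum>(j,i)\<in>Sigma {..<M} lessThan. h i j)" by (rule sum.Sigma) auto
    then show ?thesis unfolding Sg_def by (simp add: split_def)
  qed
  moreover have "2 * (\<Sum>j<M. \<Sum>i<j. h i j) = (\<Sum>i<M. \<Sum>j<M. h i j) - (\<Sum>i<M. h i i)"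
  proof (induction M)
    case 0 then show ?case by simp
  next
    case (Suc M)
    have "(\<Sum>i<Suc M. \<Sum>j<Suc M. h i j) = (\<Sum>i<M. \<Sum>j<M. h i j) + (\<Sum>i<M. h i M) + (\<Sum>j<M. h M j) + h M M"
      by (simp add: sum.distrib)
    also have "(\<Sum>j<M. h M j) = (\<Sum>i<M. h i M)" using sym by simp
    finally show ?case using Suc by simp
  qed
  ultimately show ?thesis by simp
qed

lemma card_Sg_pos: "M \<ge> 2 \<Longrightarrow> card (Sg M) > 0"
proof -
  assume "M \<ge> 2"
  then have "(1,0) \<in> Sg M" unfolding Sg_def by auto
  then show ?thesis using finite_Sg card_gt_0_iff by blast
qed


lemma orth:
  assumes Phi: "Phi \<in> carrier_mat N M" and P: "Phi * cadj Phi = 1\<^sub>m N" and l: "l < N" and k: "k < N"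
  shows "(\<Sum>j<M. Phi $$ (l,j) * cnj (Phi $$ (k,j))) = (if l = k then 1 else 0)"
proof -
  have "(Phi * cadj Phi) $$ (l,k) = (\<Sum>j<M. Phi $$ (l,j) * cnj (Phi $$ (k,j)))"
    using Phi l k by (simp add: cadj_def scalar_prod_def lessThan_atLeast0 row_def col_def)
  then show ?thesis using P l k by simp
qed

lemma ci_self: "col_inner Phi i i = of_real (aa Phi i)"
  unfolding col_inner_def aa_def of_real_sum
  by (intro sum.cong refl) (simp only: complex_norm_square)

lemma tt_diag: "tt Phi i i = (aa Phi i)^2"
  unfolding tt_def ci_self using aa_nonneg by simp

lemma ci_swap: "col_inner Phi j i = cnj (col_inner Phi i j)"
  unfolding col_inner_def by (simp add: mult.commute)

lemma tt_sym: "tt Phi i j = tt Phi j i"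
  unfolding tt_def ci_swap[of Phi j i] by simp

lemma sum_aa:
  assumes Phi: "Phi \<in> carrier_mat N M" and P: "Phi * cadj Phi = 1\<^sub>m N"
  shows "(\<Sum>i<M. aa Phi i) = real N"
proof -
  have "complex_of_real (\<Sum>i<M. aa Phi i) = (\<Sum>i<M. \<Sum>k<N. Phi $$ (k,i) * cnj (Phi $$ (k,i)))"
    unfolding aa_def of_real_sum using Phi by (simp only: complex_norm_square) simp
  also have "\<dots> = (\<Sum>k<N. \<Sum>i<M. Phi $$ (k,i) * cnj (Phi $$ (k,i)))" by (rule sum.swap)
  also have "\<dots> = (\<Sum>k<N. 1)" using orth[OF Phi P] by simp
  finally have "complex_of_real (\<Sum>i<M. aa Phi i) = of_real (real N)" by simp
  then show ?thesis using of_real_eq_iff by blast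
qed

lemma row_tt:
  assumes Phi: "Phi \<in> carrier_mat N M" and P: "Phi * cadj Phi = 1\<^sub>m N"
  shows "(\<Sum>j<M. tt Phi i j) = aa Phi i"
proof -
  let ?F = "\<lambda>k i. Phi $$ (k,i)"
  have dr: "dim_row Phi = N" using Phi by simp
  have "complex_of_real (\<Sum>j<M. tt Phi i j) = (\<Sum>j<M. col_inner Phi i j * cnj (col_inner Phi i j))"
    unfolding tt_def of_real_sum by (simp only: complex_norm_square)
  also have "\<dots> = (\<Sum>j<M. \<Sum>k<N. \<Sum>l<N. (?F k i * cnj (?F k j)) * (cnj (?F l i) * ?F l j))"
    unfolding col_inner_def dr by (simp add: sum_product)
  also have "\<dots> = (\<Sum>k<N. \<Sum>l<N. \<Sum>j<M. (?F k i * cnj (?F k j)) * (cnj (?F l i) * ?F l j))"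
    by (subst sum.swap, rule sum.cong[OF refl], rule sum.swap)
  also have "\<dots> = (\<Sum>k<N. \<Sum>l<N. (?F k i * cnj (?F l i)) * (\<Sum>j<M. ?F l j * cnj (?F k j)))"
    by (simp add: sum_distrib_left algebra_simps)
  also have "\<dots> = (\<Sum>k<N. \<Sum>l<N. (?F k i * cnj (?F l i)) * (if l = k then 1 else 0))"
    by (intro sum.cong refl) (simp add: orth[OF Phi P])
  also have "\<dots> = (\<Sum>k<N. ?F k i * cnj (?F k i))"
    by (simp add: if_distrib cong: if_cong)
  also have "\<dots> = col_inner Phi i i" unfolding col_inner_def dr ..
  finally show ?thesis unfolding ci_self using of_real_eq_iff by blast
qed


definition DD :: "complex mat \<Rightarrow> nat \<Rightarrow> nat \<Rightarrow> real" where
  "DD Phi i j = aa Phi i * aa Phi j - tt Phi i j"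
definition XX :: "complex mat \<Rightarrow> nat \<Rightarrow> nat \<Rightarrow> real" where
  "XX Phi i j = aa Phi i + aa Phi j + 2 * sqrt (DD Phi i j)"
definition PP :: "nat \<Rightarrow> real" where "PP M = real (card (Sg M))"
definition sumD :: "nat \<Rightarrow> real" where "sumD N = (real N ^ 2 - real N) / 2"
definition sumA :: "nat \<Rightarrow> nat \<Rightarrow> real" where "sumA M N = (real M - 1) * real N"
definition BB :: "nat \<Rightarrow> nat \<Rightarrow> real" where
  "BB M N = sqrt (PP M * (sumA M N + 2 * sqrt (PP M * sumD N)))"

lemma DD_nonneg: "DD Phi i j \<ge> 0" unfolding DD_def using CS[of Phi i j] by simp
lemma XX_nonneg: "XX Phi i j \<ge> 0" unfolding XX_def using aa_nonneg[of Phi i] aa_nonneg[of Phi j] DD_nonneg[of Phi i j] by simp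
lemma DD_sym: "DD Phi i j = DD Phi j i" unfolding DD_def using tt_sym[of Phi i j] by (simp add: mult.commute)
lemma XX_sym: "XX Phi i j = XX Phi j i" unfolding XX_def using DD_sym[of Phi i j] by simp

lemma Sg_mem: "p \<in> Sg M \<Longrightarrow> snd p < fst p \<and> fst p < M" unfolding Sg_def by auto

lemma NE_form:
  assumes Phi: "Phi \<in> carrier_mat N M"
  shows "nuclear_energy 2 Phi = (\<Sum>p\<in>Sg M. sqrt (XX Phi (snd p) (fst p)))"
  unfolding ne2_reindex using Phi
  by (intro sum.cong) (auto simp: nn_pair[OF Phi] Sg_mem XX_def DD_def)

lemma sum_DD:
  assumes Phi: "Phi \<in> carrier_mat N M" and P: "Phi * cadj Phi = 1\<^sub>m N"
  shows "(\<Sum>p\<in>Sg M. DD Phi (snd p) (fst p)) = sumD N"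
proof -
  have "2 * (\<Sum>p\<in>Sg M. DD Phi (snd p) (fst p)) = (\<Sum>i<M. \<Sum>j<M. DD Phi i j) - (\<Sum>i<M. DD Phi i i)"
    by (rule sym_sum) (rule DD_sym)
  also have "(\<Sum>i<M. DD Phi i i) = 0" unfolding DD_def tt_diag by (simp add: power2_eq_square)
  also have "(\<Sum>i<M. \<Sum>j<M. DD Phi i j) = (\<Sum>i<M. aa Phi i) * (\<Sum>j<M. aa Phi j) - (\<Sum>i<M. \<Sum>j<M. tt Phi i j)"
    unfolding DD_def by (simp add: sum_subtractf sum_product)
  also have "\<dots> = real N * real N - real N" unfolding sum_aa[OF Phi P] row_tt[OF Phi P] sum_aa[OF Phi P] ..
  finally show ?thesis unfolding sumD_def by (simp add: power2_eq_square)
qed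

lemma sum_AA:
  assumes Phi: "Phi \<in> carrier_mat N M" and P: "Phi * cadj Phi = 1\<^sub>m N"
  shows "(\<Sum>p\<in>Sg M. aa Phi (snd p) + aa Phi (fst p)) = sumA M N"
proof -
  have "2 * (\<Sum>p\<in>Sg M. aa Phi (snd p) + aa Phi (fst p)) = (\<Sum>i<M. \<Sum>j<M. aa Phi i + aa Phi j) - (\<Sum>i<M. aa Phi i + aa Phi i)"
    by (rule sym_sum) simp
  also have "\<dots> = real M * real N + real M * real N - 2 * real N"
    by (simp add: sum.distrib sum_aa[OF Phi P] sum_distrib_left[symmetric])
  finally show ?thesis unfolding sumA_def by (simp add: algebra_simps)
qed

lemma sum_XX:
  assumes Phi: "Phi \<in> carrier_mat N M" and P: "Phi * cadj Phi = 1\<^sub>m N"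
  shows "(\<Sum>p\<in>Sg M. XX Phi (snd p) (fst p)) = sumA M N + 2 * (\<Sum>p\<in>Sg M. sqrt (DD Phi (snd p) (fst p)))"
  unfolding XX_def sum_AA[OF Phi P, symmetric] by (simp add: sum.distrib sum_distrib_left)

lemma upper:
  assumes Phi: "Phi \<in> carrier_mat N M" and P: "Phi * cadj Phi = 1\<^sub>m N"
  shows "nuclear_energy 2 Phi \<le> sqrt (PP M * (\<Sum>p\<in>Sg M. XX Phi (snd p) (fst p)))"
    and "sqrt (PP M * (\<Sum>p\<in>Sg M. XX Phi (snd p) (fst p))) \<le> BB M N"
proof -
  show "nuclear_energy 2 Phi \<le> sqrt (PP M * (\<Sum>p\<in>Sg M. XX Phi (snd p) (fst p)))"
    unfolding NE_form[OF Phi] PP_def by (rule sqrt_sum_le) (rule XX_nonneg)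
  have "(\<Sum>p\<in>Sg M. sqrt (DD Phi (snd p) (fst p))) \<le> sqrt (PP M * sumD N)"
    unfolding sum_DD[OF Phi P, symmetric] PP_def by (rule sqrt_sum_le) (rule DD_nonneg)
  then have "(\<Sum>p\<in>Sg M. XX Phi (snd p) (fst p)) \<le> sumA M N + 2 * sqrt (PP M * sumD N)"
    unfolding sum_XX[OF Phi P] by simp
  then have "PP M * (\<Sum>p\<in>Sg M. XX Phi (snd p) (fst p)) \<le> PP M * (sumA M N + 2 * sqrt (PP M * sumD N))"
    by (rule mult_left_mono) (simp add: PP_def)
  then show "sqrt (PP M * (\<Sum>p\<in>Sg M. XX Phi (snd p) (fst p))) \<le> BB M N"
    unfolding BB_def by simp
qed

lemma aa_le1:
  assumes Phi: "Phi \<in> carrier_mat N M" and P: "Phi * cadj Phi = 1\<^sub>m N" and i: "i < M"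
  shows "aa Phi i \<le> 1"
proof -
  have "tt Phi i i \<le> (\<Sum>j<M. tt Phi i j)"
    by (rule member_le_sum) (auto simp: i tt_def)
  then have h: "(aa Phi i)^2 \<le> aa Phi i" unfolding row_tt[OF Phi P] tt_diag .
  show ?thesis
  proof (rule ccontr)
    assume "\<not> aa Phi i \<le> 1"
    then have "aa Phi i * 1 < aa Phi i * aa Phi i" by (intro mult_strict_left_mono) auto
    then show False using h by (simp add: power2_eq_square)
  qed
qed

lemma N_le_M:
  assumes Phi: "Phi \<in> carrier_mat N M" and P: "Phi * cadj Phi = 1\<^sub>m N"
  shows "N \<le> M"
proof -
  have "real N = (\<Sum>i<M. aa Phi i)" using sum_aa[OF Phi P] by simp
  also have "\<dots> \<le> (\<Sum>i<M. 1)" by (rule sum_mono) (rule aa_le1[OF Phi P], simp)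
  finally show ?thesis by simp
qed

lemma equality_case:
  assumes Phi: "Phi \<in> carrier_mat N M" and P: "Phi * cadj Phi = 1\<^sub>m N" and M2: "M \<ge> 2"
    and eq: "nuclear_energy 2 Phi = BB M N"
  shows "\<forall>p\<in>Sg M. \<forall>q\<in>Sg M. XX Phi (snd p) (fst p) = XX Phi (snd q) (fst q)"
    and "\<forall>p\<in>Sg M. \<forall>q\<in>Sg M. DD Phi (snd p) (fst p) = DD Phi (snd q) (fst q)"
proof -
  note u = upper[OF Phi P]
  have e1: "nuclear_energy 2 Phi = sqrt (PP M * (\<Sum>p\<in>Sg M. XX Phi (snd p) (fst p)))" using u eq by linarith
  have e2: "sqrt (PP M * (\<Sum>p\<in>Sg M. XX Phi (snd p) (fst p))) = BB M N" using u eq by linarith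
  show "\<forall>p\<in>Sg M. \<forall>q\<in>Sg M. XX Phi (snd p) (fst p) = XX Phi (snd q) (fst q)"
    by (rule sqrt_sum_eq[where x = "\<lambda>p. XX Phi (snd p) (fst p)"]) (auto simp: XX_nonneg e1[unfolded NE_form[OF Phi] PP_def])
  have Ppos: "PP M > 0" unfolding PP_def using card_Sg_pos[OF M2] by simp
  have "PP M * (\<Sum>p\<in>Sg M. XX Phi (snd p) (fst p)) = PP M * (sumA M N + 2 * sqrt (PP M * sumD N))"
    using e2 unfolding BB_def by simp
  then have "(\<Sum>p\<in>Sg M. XX Phi (snd p) (fst p)) = sumA M N + 2 * sqrt (PP M * sumD N)"
    using Ppos by simp
  then have "(\<Sum>p\<in>Sg M. sqrt (DD Phi (snd p) (fst p))) = sqrt (real (card (Sg M)) * (\<Sum>p\<in>Sg M. DD Phi (snd p) (fst p)))"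
    unfolding sum_XX[OF Phi P] sum_DD[OF Phi P] PP_def by simp
  then show "\<forall>p\<in>Sg M. \<forall>q\<in>Sg M. DD Phi (snd p) (fst p) = DD Phi (snd q) (fst q)"
    by (rule sqrt_sum_eq[where x = "\<lambda>p. DD Phi (snd p) (fst p)", rotated 2]) (auto simp: DD_nonneg)
qed


lemma col_norm_aa: "col_norm Phi i = sqrt (aa Phi i)"
  unfolding col_norm_def aa_def ..

lemma cmod_tt: "cmod (col_inner Phi i j) = sqrt (tt Phi i j)"
  unfolding tt_def by simp

lemma sym_const:
  fixes f :: "nat \<Rightarrow> nat \<Rightarrow> real"
  assumes sym: "\<And>i j. f i j = f j i"
    and c: "\<forall>p\<in>Sg M. \<forall>q\<in>Sg M. f (snd p) (fst p) = f (snd q) (fst q)"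
    and M2: "M \<ge> 2" and ij: "i \<noteq> j" "i < M" "j < M"
  shows "f i j = f 0 1"
proof -
  have q: "(1,0) \<in> Sg M" using M2 unfolding Sg_def by auto
  have p: "(max i j, min i j) \<in> Sg M" using ij unfolding Sg_def by (auto simp: min_def max_def)
  have "f (min i j) (max i j) = f 0 1" using c p q by fastforce
  moreover have "f i j = f (min i j) (max i j)" using sym by (cases "i < j") (auto simp: min_def max_def)
  ultimately show ?thesis by simp
qed

lemma equi_NE:
  assumes Phi: "Phi \<in> carrier_mat N M" and P: "Phi * cadj Phi = 1\<^sub>m N" and M2: "M \<ge> 2"
    and E: "equiangular Phi"
  shows "nuclear_energy 2 Phi = BB M N"
proof -
  have dc: "dim_col Phi = M" using Phi by simp
  have E1: "\<forall>i<M. \<forall>j<M. sqrt (aa Phi i) = sqrt (aa Phi j)"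
    using E unfolding equiangular_def dc col_norm_aa by (rule conjunct1)
  have E2: "\<forall>i<M. \<forall>j<M. \<forall>k<M. \<forall>l<M. i \<noteq> j \<longrightarrow> k \<noteq> l \<longrightarrow> sqrt (tt Phi i j) = sqrt (tt Phi k l)"
    using E unfolding equiangular_def dc cmod_tt by (rule conjunct2)
  have aeq: "aa Phi i = aa Phi j" if "i < M" "j < M" for i j
  proof -
    have "sqrt (aa Phi i) = sqrt (aa Phi j)" using E1 that by blast
    then show ?thesis by simp
  qed
  have teq: "tt Phi i j = tt Phi k l" if "i < M" "j < M" "k < M" "l < M" "i \<noteq> j" "k \<noteq> l" for i j k l
  proof -
    have "sqrt (tt Phi i j) = sqrt (tt Phi k l)" by (rule E2[rule_format, OF that])
    then show ?thesis by simp
  qed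
  have Dc: "DD Phi (snd p) (fst p) = DD Phi 0 1" if "p \<in> Sg M" for p
    using Sg_mem[OF that] M2 aeq[of "snd p" 0] aeq[of "fst p" 1] teq[of "snd p" "fst p" 0 1]
    unfolding DD_def by auto
  have Xc: "XX Phi (snd p) (fst p) = XX Phi 0 1" if "p \<in> Sg M" for p
    using Sg_mem[OF that] M2 aeq[of "snd p" 0] aeq[of "fst p" 1] Dc[OF that]
    unfolding XX_def by auto
  have "nuclear_energy 2 Phi = sqrt (PP M * (\<Sum>p\<in>Sg M. XX Phi (snd p) (fst p)))"
    unfolding NE_form[OF Phi] PP_def by (rule sqrt_sum_const[OF Xc XX_nonneg])
  also have "(\<Sum>p\<in>Sg M. XX Phi (snd p) (fst p)) = sumA M N + 2 * sqrt (PP M * sumD N)"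
    unfolding sum_XX[OF Phi P] sum_DD[OF Phi P, symmetric] PP_def
    by (subst sqrt_sum_const[OF Dc DD_nonneg]) auto
  finally show ?thesis unfolding BB_def .
qed

lemma const_equi:
  assumes Phi: "Phi \<in> carrier_mat N M" and P: "Phi * cadj Phi = 1\<^sub>m N" and N2: "N \<ge> 2"
    and cX: "\<forall>p\<in>Sg M. \<forall>q\<in>Sg M. XX Phi (snd p) (fst p) = XX Phi (snd q) (fst q)"
    and cD: "\<forall>p\<in>Sg M. \<forall>q\<in>Sg M. DD Phi (snd p) (fst p) = DD Phi (snd q) (fst q)"
  shows "equiangular Phi"
proof -
  have dc: "dim_col Phi = M" using Phi by simp
  have M2: "M \<ge> 2" using N_le_M[OF Phi P] N2 by simp
  have Xs: "XX Phi i j = XX Phi 0 1" if "i \<noteq> j" "i < M" "j < M" for i j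
    by (rule sym_const[OF XX_sym cX M2 that])
  have Ds: "DD Phi i j = DD Phi 0 1" if "i \<noteq> j" "i < M" "j < M" for i j
    by (rule sym_const[OF DD_sym cD M2 that])
  have aeq: "aa Phi i = aa Phi j" if ij: "i < M" "j < M" for i j
  proof (cases "M = 2")
    case True
    then have "N = 2" using N_le_M[OF Phi P] N2 by simp
    then have s: "aa Phi 0 + aa Phi 1 = 2" using sum_aa[OF Phi P] True by (simp add: numeral_2_eq_2)
    have "aa Phi 0 \<le> 1" "aa Phi 1 \<le> 1" using aa_le1[OF Phi P] True by auto
    then have "aa Phi 0 = 1" "aa Phi 1 = 1" using s by auto
    moreover have "i = 0 \<or> i = 1" "j = 0 \<or> j = 1" using ij True by auto
    ultimately show ?thesis by auto
  next
    case False
    then have M3: "M \<ge> 3" using M2 by simp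
    have sA: "aa Phi a + aa Phi b = aa Phi 0 + aa Phi 1" if "a \<noteq> b" "a < M" "b < M" for a b
      using Xs[OF that] Ds[OF that] unfolding XX_def by simp
    show ?thesis
    proof (cases "i = j")
      case False
      obtain k where k: "k < M" "k \<noteq> i" "k \<noteq> j"
      proof -
        have "\<exists>k\<in>{0,1,2::nat}. k \<noteq> i \<and> k \<noteq> j" by auto
        then obtain k where "k \<in> {0,1,2::nat}" "k \<noteq> i" "k \<noteq> j" by blast
        moreover then have "k < M" using M3 by auto
        ultimately show ?thesis using that by blast
      qed
      have "aa Phi i + aa Phi k = aa Phi j + aa Phi k"
        using sA[of i k] sA[of j k] k ij by auto
      then show ?thesis by simp
    qed simp
  qed
  have teq: "tt Phi i j = tt Phi 0 1" if "i \<noteq> j" "i < M" "j < M" for i j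
  proof -
    have "tt Phi i j = aa Phi i * aa Phi j - DD Phi i j" unfolding DD_def by simp
    also have "\<dots> = aa Phi 0 * aa Phi 1 - DD Phi 0 1"
      using Ds[OF that] aeq[of i 0] aeq[of j 1] that M2 by simp
    also have "\<dots> = tt Phi 0 1" unfolding DD_def by simp
    finally show ?thesis .
  qed
  show ?thesis unfolding equiangular_def dc col_norm_aa cmod_tt
  proof (intro conjI allI impI)
    fix i j assume "i < M" "j < M"
    then show "sqrt (aa Phi i) = sqrt (aa Phi j)" using aeq[of i j] by simp
  next
    fix i j k l assume "i < M" "j < M" "k < M" "l < M" "i \<noteq> j" "k \<noteq> l"
    then show "sqrt (tt Phi i j) = sqrt (tt Phi k l)" using teq[of i j] teq[of k l] by simp
  qed
qed

theorem theorem15: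
  fixes FF :: "complex set" and N M :: nat and Phi :: "complex mat"
  assumes "FF = \<real> \<or> FF = UNIV"
    and "N \<ge> 2"
    and "\<exists>Psi. parseval_frame FF N M Psi \<and> equiangular Psi"
    and "parseval_frame FF N M Phi"
  shows "(\<forall>Psi. parseval_frame FF N M Psi \<longrightarrow> nuclear_energy 2 Psi \<le> nuclear_energy 2 Phi)
         \<longleftrightarrow> equiangular Phi"
proof -
  have Phi: "Phi \<in> carrier_mat N M" and P: "Phi * cadj Phi = 1\<^sub>m N"
    using assms(4) unfolding parseval_frame_def by auto
  obtain Psi0 where Psi0: "parseval_frame FF N M Psi0" "equiangular Psi0" using assms(3) by blast
  have Psi0c: "Psi0 \<in> carrier_mat N M" and P0: "Psi0 * cadj Psi0 = 1\<^sub>m N"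
    using Psi0(1) unfolding parseval_frame_def by auto
  have M2: "M \<ge> 2" using N_le_M[OF Phi P] assms(2) by simp
  have ub: "nuclear_energy 2 Psi \<le> BB M N" if "parseval_frame FF N M Psi" for Psi
  proof -
    have "Psi \<in> carrier_mat N M" "Psi * cadj Psi = 1\<^sub>m N" using that unfolding parseval_frame_def by auto
    from upper[OF this] show ?thesis by linarith
  qed
  have NE0: "nuclear_energy 2 Psi0 = BB M N" by (rule equi_NE[OF Psi0c P0 M2 Psi0(2)])
  show ?thesis
  proof
    assume H: "\<forall>Psi. parseval_frame FF N M Psi \<longrightarrow> nuclear_energy 2 Psi \<le> nuclear_energy 2 Phi"
    have "nuclear_energy 2 Phi = BB M N" using H Psi0(1) NE0 ub[OF assms(4)] by force
    from equality_case[OF Phi P M2 this] show "equiangular Phi"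
      using const_equi[OF Phi P assms(2)] by blast
  next
    assume "equiangular Phi"
    then have "nuclear_energy 2 Phi = BB M N" by (rule equi_NE[OF Phi P M2])
    then show "\<forall>Psi. parseval_frame FF N M Psi \<longrightarrow> nuclear_energy 2 Psi \<le> nuclear_energy 2 Phi"
      using ub by simp
  qed
qed

end
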